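(* Let $k\ge 3$ be an integer and $1/2<q<1$. Let $f:[1/k,1]\to\mathbb R$ be given by $$f(x) = x^q(k-2+x)^{(k-1)q} + (k-1)(1-x)^{2q}(k-2+x)^{(k-2)q}.$$ Then $f$ attains its maximum on $[1/k,1]$ at $x=1/k$ or at $x=1$. *)

theory Defs
  imports Complex_Main
begin

definition f45 :: "nat \<Rightarrow> real \<Rightarrow> real \<Rightarrow> real" where
  "f45 k q x = x powr q * (real k - 2 + x) powr (real (k - 1) * q)
     + real (k - 1) * (1 - x) powr (2 * q) * (real k - 2 + x) powr (real (k - 2) * q)"

end

theory Submission
  imports Defs
begin

definition FF :: "real \<Rightarrow> real \<Rightarrow> real \<Rightarrow> real" where
 "FF m q x = x powr q * (m+x) powr ((m+1)*q) + (m+1)*(1-x) powr (2*q) * (m+x) powr (m*q)"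

lemma FF_deriv:
  assumes m: "m > 0" and x: "0 < x" "x < 1"
  shows "(FF m q has_real_derivative
     q*(m+(m+2)*x)*(m+x) powr (m*q-1) * (x powr (q-1)*(m+x) powr q - (m+1)*(1-x) powr (2*q-1))) (at x)"
proof -
  have mx: "m + x > 0" using m x by simp
  have ox: "1 - x > 0" using x by simp
  have d1: "((\<lambda>x. x powr q) has_real_derivative q * x powr (q-1)) (at x)"
    using has_real_derivative_powr x by blast
  have d2: "((\<lambda>x. (m+x) powr r) has_real_derivative r * (m+x) powr (r-1)) (at x)" for r
    using DERIV_fun_powr[of "\<lambda>x. m+x" 1 x r] mx by (auto intro!: derivative_eq_intros)
  have d3: "((\<lambda>x. (1-x) powr r) has_real_derivative r * (1-x) powr (r-1) * (-1)) (at x)" for r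
    using DERIV_fun_powr[of "\<lambda>x. 1-x" "-1" x r] ox by (auto intro!: derivative_eq_intros)
  have D: "(FF m q has_real_derivative
      ((q * x powr (q-1)) * (m+x) powr ((m+1)*q) + (((m+1)*q) * (m+x) powr ((m+1)*q-1)) * x powr q)
      + (((m+1) * ((2*q) * (1-x) powr (2*q-1) * (-1))) * (m+x) powr (m*q) + ((m*q) * (m+x) powr (m*q-1)) * ((m+1) * (1-x) powr (2*q)))) (at x)"
    unfolding FF_def[abs_def]
    by (intro DERIV_add DERIV_mult d1 d2 d3 DERIV_cmult)
  define A where "A = x powr q"
  define B where "B = (m+x) powr (m*q)"
  define C where "C = (m+x) powr q"
  define E where "E = (1-x) powr (2*q)"
  have e1: "x powr (q-1) = A / x" unfolding A_def using x by (simp add: powr_diff)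
  have e2: "(m+x) powr ((m+1)*q) = B * C" unfolding B_def C_def using mx by (simp add: powr_add[symmetric] algebra_simps)
  have e3: "(m+x) powr ((m+1)*q-1) = B * C / (m+x)" using e2 mx by (simp add: powr_diff)
  have e4: "(m+x) powr (m*q-1) = B / (m+x)" unfolding B_def using mx by (simp add: powr_diff)
  have e5: "(1-x) powr (2*q-1) = E / (1-x)" unfolding E_def using ox by (simp add: powr_diff)
  have eq: "((q * x powr (q-1)) * (m+x) powr ((m+1)*q) + (((m+1)*q) * (m+x) powr ((m+1)*q-1)) * x powr q)
      + (((m+1) * ((2*q) * (1-x) powr (2*q-1) * (-1))) * (m+x) powr (m*q) + ((m*q) * (m+x) powr (m*q-1)) * ((m+1) * (1-x) powr (2*q)))
     = q*(m+(m+2)*x)*(m+x) powr (m*q-1) * (x powr (q-1)*(m+x) powr q - (m+1)*(1-x) powr (2*q-1))"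
    unfolding e1 e2 e3 e4 e5 A_def[symmetric] B_def[symmetric] C_def[symmetric] E_def[symmetric]
    using x mx ox
    apply (simp add: divide_simps)
    apply (simp add: algebra_simps)
    done
  show ?thesis using D unfolding eq .
qed

definition LL :: "real \<Rightarrow> real \<Rightarrow> real \<Rightarrow> real" where
 "LL m q x = (q-1)*ln x + q*ln(m+x) - (2*q-1)*ln(1-x)"

lemma LL_deriv:
  assumes m: "m > 0" and x: "0 < x" "x < 1"
  shows "(LL m q has_real_derivative ((q-1)*m + (2*q-1+m*q)*x)/(x*(m+x)*(1-x))) (at x)"
proof -
  have mx: "m + x > 0" using m x by simp
  have ox: "1 - x > 0" using x by simp
  have D: "(LL m q has_real_derivative ((q-1)*(1/x) + q*(1/(m+x))) - (2*q-1)*((-1)/(1-x))) (at x)"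
    unfolding LL_def[abs_def] using x mx ox
    by (intro DERIV_add DERIV_diff DERIV_cmult) (auto intro!: derivative_eq_intros)
  have eq: "((q-1)*(1/x) + q*(1/(m+x))) - (2*q-1)*((-1)/(1-x)) = ((q-1)*m + (2*q-1+m*q)*x)/(x*(m+x)*(1-x))"
    using x mx ox
    apply (simp add: divide_simps)
    apply (simp add: algebra_simps)
    done
  show ?thesis using D unfolding eq .
qed

lemma LL_qc:
  assumes m: "m > 0" and q: "1/2 < q" and a: "0 < a" "a \<le> y" "y \<le> c" "c < 1"
  shows "LL m q y \<le> max (LL m q a) (LL m q c)"
proof (cases "(q-1)*m + (2*q-1+m*q)*y \<le> 0")
  case True
  have sl: "2*q-1+m*q > 0" using m q by (simp add: add_pos_pos)
  have "LL m q a \<ge> LL m q y"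
  proof (rule DERIV_nonpos_imp_nonincreasing[OF a(2)])
    fix z assume z: "a \<le> z" "z \<le> y"
    have "(q-1)*m + (2*q-1+m*q)*z \<le> (q-1)*m + (2*q-1+m*q)*y"
      using z sl by (intro add_left_mono mult_left_mono) auto
    hence "((q-1)*m + (2*q-1+m*q)*z)/(z*(m+z)*(1-z)) \<le> 0"
      using True z a m by (intro divide_nonpos_pos) auto
    then show "\<exists>d. (LL m q has_real_derivative d) (at z) \<and> d \<le> 0"
      using LL_deriv[of m z q] z a m by auto
  qed
  then show ?thesis by simp
next
  case False
  have sl: "2*q-1+m*q > 0" using m q by (simp add: add_pos_pos)
  have "LL m q y \<le> LL m q c"
  proof (rule DERIV_nonneg_imp_nondecreasing[OF a(3)])
    fix z assume z: "y \<le> z" "z \<le> c"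
    have "(q-1)*m + (2*q-1+m*q)*z \<ge> (q-1)*m + (2*q-1+m*q)*y"
      using z sl by (intro add_left_mono mult_left_mono) auto
    hence "((q-1)*m + (2*q-1+m*q)*z)/(z*(m+z)*(1-z)) \<ge> 0"
      using False z a m by (intro divide_nonneg_pos) auto
    then show "\<exists>d. (LL m q has_real_derivative d) (at z) \<and> d \<ge> 0"
      using LL_deriv[of m z q] z a m by auto
  qed
  then show ?thesis by simp
qed

lemma PQ_LL:
  assumes m: "m > 0" and x: "0 < x" "x < 1"
  shows "(x powr (q-1)*(m+x) powr q \<le> (m+1)*(1-x) powr (2*q-1)) \<longleftrightarrow> LL m q x \<le> ln (m+1)"
    and "(x powr (q-1)*(m+x) powr q = (m+1)*(1-x) powr (2*q-1)) \<longleftrightarrow> LL m q x = ln (m+1)"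
proof -
  have mx: "m + x > 0" using m x by simp
  have ox: "1 - x > 0" using x by simp
  have p1: "x powr (q-1)*(m+x) powr q > 0" using x mx by simp
  have p2: "(m+1)*(1-x) powr (2*q-1) > 0" using ox m by simp
  have l1: "ln (x powr (q-1)*(m+x) powr q) = (q-1)*ln x + q*ln(m+x)"
    using x mx by (simp add: ln_mult ln_powr)
  have l2: "ln ((m+1)*(1-x) powr (2*q-1)) = ln (m+1) + (2*q-1)*ln(1-x)"
    using ox m by (simp add: ln_mult ln_powr)
  show "(x powr (q-1)*(m+x) powr q \<le> (m+1)*(1-x) powr (2*q-1)) \<longleftrightarrow> LL m q x \<le> ln (m+1)"
    using ln_le_cancel_iff[OF p1 p2] l1 l2 unfolding LL_def by linarith
  show "(x powr (q-1)*(m+x) powr q = (m+1)*(1-x) powr (2*q-1)) \<longleftrightarrow> LL m q x = ln (m+1)"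
    using ln_inj_iff[OF p1 p2] l1 l2 unfolding LL_def by linarith
qed

lemma LL_a:
  assumes m: "m > 0"
  shows "LL m q (1/(m+2)) = ln (m+1)"
proof -
  have e1: "ln (1/(m+2)) = - ln (m+2)" using m by (simp add: ln_div)
  have "m + 1/(m+2) = (m+1)^2/(m+2)" using m by (simp add: field_simps power2_eq_square)
  hence e2: "ln (m + 1/(m+2)) = 2*ln(m+1) - ln(m+2)" using m by (simp add: ln_div ln_realpow)
  have "1 - 1/(m+2) = (m+1)/(m+2)" using m by (simp add: field_simps)
  hence e3: "ln (1 - 1/(m+2)) = ln(m+1) - ln(m+2)" using m by (simp add: ln_div)
  show ?thesis unfolding LL_def e1 e2 e3 by (simp add: algebra_simps)
qed

lemma FF_cont:
  assumes m: "m > 0" and q: "q > 0" and a: "a > 0"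
  shows "continuous_on {a..1} (FF m q)"
  unfolding FF_def[abs_def] using m q a
  by (intro continuous_intros continuous_on_powr') auto

lemma FF_main:
  assumes m: "m > 0" and q: "1/2 < q" "q < 1"
  shows "(\<forall>x\<in>{1/(m+2)..1}. FF m q x \<le> FF m q (1/(m+2))) \<or> (\<forall>x\<in>{1/(m+2)..1}. FF m q x \<le> FF m q 1)"
proof (rule ccontr)
  define a where "a = 1/(m+2)"
  have a0: "0 < a" and a1: "a < 1" using m unfolding a_def by (auto simp: field_simps)
  assume "\<not> ?thesis"
  then obtain x1 x2 where x1: "x1 \<in> {a..1}" "FF m q x1 > FF m q a"
    and x2: "x2 \<in> {a..1}" "FF m q x2 > FF m q 1"
    unfolding a_def[symmetric] by force
  obtain c where c: "c \<in> {a..1}" and cmax: "\<forall>y\<in>{a..1}. FF m q y \<le> FF m q c"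
    using continuous_attains_sup[of "{a..1}" "FF m q"] FF_cont[of m q a] m q a0 a1 by auto
  have "FF m q c > FF m q a" using cmax x1 by force
  moreover have "FF m q c > FF m q 1" using cmax x2 by force
  ultimately have ac: "a < c" and c1: "c < 1" using c by (auto simp: order.order_iff_strict)
  define fd where "fd = (\<lambda>x. q*(m+(m+2)*x)*(m+x) powr (m*q-1) * (x powr (q-1)*(m+x) powr q - (m+1)*(1-x) powr (2*q-1)))"
  have der: "\<And>x. 0 < x \<Longrightarrow> x < 1 \<Longrightarrow> (FF m q has_real_derivative fd x) (at x)"
    unfolding fd_def using FF_deriv m by blast
  have "fd c = 0"
  proof (rule DERIV_local_max[OF der])
    show "0 < c" "c < 1" using ac a0 c1 by auto
    show "0 < min (c-a) (1-c)" using ac c1 by auto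
    show "\<forall>y. \<bar>c - y\<bar> < min (c - a) (1 - c) \<longrightarrow> FF m q y \<le> FF m q c"
      using cmax by (auto simp: abs_if split: if_splits)
  qed
  moreover have "q*(m+(m+2)*c)*(m+c) powr (m*q-1) > 0" using q m ac a0 by (simp add: add_pos_pos)
  ultimately have "c powr (q-1)*(m+c) powr q = (m+1)*(1-c) powr (2*q-1)"
    unfolding fd_def by (metis mult_eq_0_iff less_irrefl eq_iff_diff_eq_0)
  hence Lc: "LL m q c = ln (m+1)" using PQ_LL(2)[of m c q] m ac a0 c1 by auto
  have La: "LL m q a = ln (m+1)" unfolding a_def using LL_a m by blast
  have "FF m q a \<ge> FF m q c"
  proof (rule DERIV_nonpos_imp_nonincreasing[of a c "FF m q"])
    show "a \<le> c" using ac by simp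
    fix y assume y: "a \<le> y" "y \<le> c"
    have "LL m q y \<le> ln (m+1)" using LL_qc[of m q a y c] m q a0 y c1 La Lc by auto
    hence "y powr (q-1)*(m+y) powr q \<le> (m+1)*(1-y) powr (2*q-1)"
      using PQ_LL(1)[of m y q] m y a0 c1 by auto
    moreover have "q*(m+(m+2)*y)*(m+y) powr (m*q-1) \<ge> 0" using q m y a0 by simp
    ultimately have "fd y \<le> 0" unfolding fd_def by (simp add: mult_nonneg_nonpos)
    then show "\<exists>d. (FF m q has_real_derivative d) (at y) \<and> d \<le> 0"
      using der[of y] y a0 c1 by auto
  qed
  then show False using \<open>FF m q c > FF m q a\<close> by simp
qed

theorem lemma4p5:
  fixes k :: nat and q :: real
  assumes "k \<ge> 3" and "1/2 < q" and "q < 1"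
  shows "(\<forall>x\<in>{1 / real k..1}. f45 k q x \<le> f45 k q (1 / real k))
       \<or> (\<forall>x\<in>{1 / real k..1}. f45 k q x \<le> f45 k q 1)"
proof -
  define m where "m = real k - 2"
  have m0: "m > 0" using assms(1) unfolding m_def by simp
  have e1: "real (k-1) = m + 1" and e2: "real (k-2) = m" and e3: "real k = m + 2"
    using assms(1) unfolding m_def by (auto simp: of_nat_diff)
  have eq: "f45 k q x = FF m q x" for x
    unfolding f45_def FF_def e1 e2 by (simp add: m_def)
  show ?thesis unfolding eq e3 using FF_main[OF m0 assms(2,3)] .
qed

end
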